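(* Let $K$ be an algebraically closed field, complete with respect to a non-Archimedean norm $|\cdot|$ (possibly trivial), let $R>0$ be real and $K_R:=\{k\in K:|k|\le R\}$. Let $\mathcal{F}$ be an $R$-good filter. For each $B_q(k)\in\mathcal{F}$ define $|\cdot|_{B_q(k)}:\mathcal{A}_{\mathrm{Lin}}\to\mathbb{R}_{\ge0}$ by $|aT-b|_{B_q(k)}:=\max\{|ak-b|,\,|a|\cdot q\}$. Then the map $|aT-b|_{\mathcal{F}}:=\inf_{B_q(k)\in\mathcal{F}}|aT-b|_{B_q(k)}$ defines a bounded $K$-seminorm on $\mathcal{A}_{\mathrm{Lin}}$.
   Context: $\mathcal{A}_{\mathrm{Lin}}:=\{aT-b: a,b\in K\}$. An upper real is a subset $x\subseteq\mathbb{Q}$ (write $x<q$ for $q\in x$) that is upward closed and rounded; the right Dedekind section of a real $r$ is $\{q\in\mathbb{Q}:r<q\}$; $x\le y$ for upper reals means $\{q:y<q\}\subseteq\{q:x<q\}$; the infimum of a family of reals $x_i$ is the upper real $\bigcup_i\{q\in\mathbb{Q}:x_i<q\}$. A $K$-seminorm on $\mathcal{A}_{\mathrm{Lin}}$ is a map $|\cdot|_x$ from $\mathcal{A}_{\mathrm{Lin}}$ to inhabited upper reals $\ge0$ such that for $a\in K$, $f,f'\in\mathcal{A}_{\mathrm{Lin}}$: $|a|_x$ is the right Dedekind section of $|a|$; $|aT|_x=|a|\cdot|T|_x$; $|f+f'|_x\le\max\{|f|_x,|f'|_x\}$. It is bounded if $|aT-b|_x\le$ the right Dedekind section of $\max\{|a|R,|b|\}$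 for all $a,b\in K$. A formal ball is a pair $(k,q)\in K_R\times\mathbb{Q}_{>0}$, written $B_q(k)$, with $B_{q'}(k')\subseteq B_q(k)$ meaning $|k-k'|<q$ and $q'\le q$. A filter of formal balls is an inhabited set $\mathcal{F}$ of formal balls, upward closed under $\subseteq$, such that any two members have a common member of $\mathcal{F}$ contained in both. It is $R$-good if moreover $B_q(k)\in\mathcal{F}$ for all $k\in K_R$ and rationals $q>R$, and whenever $B_q(k)\in\mathcal{F}$ there is $B_{q'}(k')\in\mathcal{F}$ with $q'<q$. *)

theory Defs
  imports Complex_Main "HOL-Computational_Algebra.Polynomial"
begin

definition nonarch_norm :: "('a::field \<Rightarrow> real) \<Rightarrow> bool" where
  "nonarch_norm nrm \<longleftrightarrow>
     (\<forall>x. 0 \<le> nrm x) \<and> (\<forall>x. nrm x = 0 \<longleftrightarrow> x = 0) \<and>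
     (\<forall>x y. nrm (x * y) = nrm x * nrm y) \<and>
     (\<forall>x y. nrm (x + y) \<le> max (nrm x) (nrm y))"

definition complete_wrt :: "('a::field \<Rightarrow> real) \<Rightarrow> bool" where
  "complete_wrt nrm \<longleftrightarrow>
     (\<forall>s :: nat \<Rightarrow> 'a.
        (\<forall>e>0. \<exists>N. \<forall>m\<ge>N. \<forall>n\<ge>N. nrm (s m - s n) < e) \<longrightarrow>
        (\<exists>l. \<forall>e>0. \<exists>N. \<forall>n\<ge>N. nrm (s n - l) < e))"

definition alg_closed :: "'a::field itself \<Rightarrow> bool" where
  "alg_closed _ \<longleftrightarrow> (\<forall>p :: 'a poly. 0 < degree p \<longrightarrow> (\<exists>x. poly p x = 0))"

text \<open>An element \<open>aT - b\<close> of \<open>A_Lin\<close> is represented by the pair \<open>(a, b)\<close>;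
  this representation is unique. The constant \<open>c \<in> K\<close>
  is \<open>(0, -c)\<close>, \<open>aT\<close> is \<open>(a, 0)\<close> and \<open>T\<close> is \<open>(1, 0)\<close>.\<close>
type_synonym 'a lin = "'a \<times> 'a"

definition lin_add :: "'a::field lin \<Rightarrow> 'a lin \<Rightarrow> 'a lin" where
  "lin_add f g = (fst f + fst g, snd f + snd g)"

type_synonym ureal = "rat set"

definition upper_real :: "ureal \<Rightarrow> bool" where
  "upper_real x \<longleftrightarrow> (\<forall>q\<in>x. \<forall>q'. q \<le> q' \<longrightarrow> q' \<in> x) \<and> (\<forall>q\<in>x. \<exists>q'\<in>x. q' < q)"

definition inhabited_ureal :: "ureal \<Rightarrow> bool" where
  "inhabited_ureal x \<longleftrightarrow> upper_real x \<and> x \<noteq> {}"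

text \<open>right Dedekind section of a real\<close>
definition rsec :: "real \<Rightarrow> ureal" where
  "rsec r = {q. r < real_of_rat q}"

text \<open>\<open>x \<le> y\<close> iff \<open>{q. y < q} \<subseteq> {q. x < q}\<close>\<close>
definition ule :: "ureal \<Rightarrow> ureal \<Rightarrow> bool" where
  "ule x y \<longleftrightarrow> y \<subseteq> x"

text \<open>maximum of upper reals: \<open>max x y < q\<close> iff \<open>x < q\<close> and \<open>y < q\<close>\<close>
definition umax :: "ureal \<Rightarrow> ureal \<Rightarrow> ureal" where
  "umax x y = x \<inter> y"

definition umult :: "ureal \<Rightarrow> ureal \<Rightarrow> ureal" where
  "umult x y = {q. \<exists>r\<in>x. \<exists>s\<in>y. r * s \<le> q}"

definition K_seminorm :: "('a::field \<Rightarrow> real) \<Rightarrow> ('a lin \<Rightarrow> ureal) \<Rightarrow> bool" where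
  "K_seminorm nrm sn \<longleftrightarrow>
     (\<forall>f. inhabited_ureal (sn f) \<and> ule (rsec 0) (sn f)) \<and>
     (\<forall>a. sn (0, - a) = rsec (nrm a)) \<and>
     (\<forall>a. sn (a, 0) = umult (rsec (nrm a)) (sn (1, 0))) \<and>
     (\<forall>f g. ule (sn (lin_add f g)) (umax (sn f) (sn g)))"

definition bounded_K_seminorm ::
    "('a::field \<Rightarrow> real) \<Rightarrow> real \<Rightarrow> ('a lin \<Rightarrow> ureal) \<Rightarrow> bool" where
  "bounded_K_seminorm nrm R sn \<longleftrightarrow> K_seminorm nrm sn \<and>
     (\<forall>a b. ule (sn (a, b)) (rsec (max (nrm a * R) (nrm b))))"

text \<open>A formal ball \<open>B_q(k)\<close> is the pair \<open>(k, q)\<close>.\<close>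
definition formal_ball :: "('a::field \<Rightarrow> real) \<Rightarrow> real \<Rightarrow> 'a \<times> rat \<Rightarrow> bool" where
  "formal_ball nrm R B \<longleftrightarrow> nrm (fst B) \<le> R \<and> 0 < snd B"

text \<open>\<open>ball_sub nrm B' B\<close>: \<open>B_{q'}(k') \<subseteq> B_q(k)\<close>\<close>
definition ball_sub :: "('a::field \<Rightarrow> real) \<Rightarrow> 'a \<times> rat \<Rightarrow> 'a \<times> rat \<Rightarrow> bool" where
  "ball_sub nrm B' B \<longleftrightarrow> nrm (fst B - fst B') < real_of_rat (snd B) \<and> snd B' \<le> snd B"

definition ball_filter :: "('a::field \<Rightarrow> real) \<Rightarrow> real \<Rightarrow> ('a \<times> rat) set \<Rightarrow> bool" where
  "ball_filter nrm R F \<longleftrightarrow>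
     (\<forall>B\<in>F. formal_ball nrm R B) \<and> F \<noteq> {} \<and>
     (\<forall>B'\<in>F. \<forall>B. formal_ball nrm R B \<and> ball_sub nrm B' B \<longrightarrow> B \<in> F) \<and>
     (\<forall>B1\<in>F. \<forall>B2\<in>F. \<exists>B3\<in>F. ball_sub nrm B3 B1 \<and> ball_sub nrm B3 B2)"

definition R_good :: "('a::field \<Rightarrow> real) \<Rightarrow> real \<Rightarrow> ('a \<times> rat) set \<Rightarrow> bool" where
  "R_good nrm R F \<longleftrightarrow> ball_filter nrm R F \<and>
     (\<forall>k q. nrm k \<le> R \<and> R < real_of_rat q \<longrightarrow> (k, q) \<in> F) \<and>
     (\<forall>k q. (k, q) \<in> F \<longrightarrow> (\<exists>k' q'. (k', q') \<in> F \<and> q' < q))"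

definition ball_norm :: "('a::field \<Rightarrow> real) \<Rightarrow> 'a \<times> rat \<Rightarrow> 'a lin \<Rightarrow> real" where
  "ball_norm nrm B f = max (nrm (fst f * fst B - snd f)) (nrm (fst f) * real_of_rat (snd B))"

text \<open>infimum over the filter, as an upper real: union of right sections\<close>
definition filter_norm :: "('a::field \<Rightarrow> real) \<Rightarrow> ('a \<times> rat) set \<Rightarrow> 'a lin \<Rightarrow> ureal" where
  "filter_norm nrm F f = (\<Union>B\<in>F. rsec (ball_norm nrm B f))"

end

theory Submission
  imports Defs
begin

lemma nn_basic:
  assumes "nonarch_norm nrm"
  shows "nrm 0 = 0" "nrm (1::'a::field) = 1" "nrm (- x) = nrm x" "\<And>x. 0 \<le> nrm x"
    "\<And>x y. nrm (x * y) = nrm x * nrm y" "\<And>x y. nrm (x + y) \<le> max (nrm x) (nrm y)"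
    "\<And>x y. nrm (x - y) \<le> max (nrm x) (nrm y)"
proof -
  have nn: "\<And>x. 0 \<le> nrm x" and z: "\<And>x. nrm x = 0 \<longleftrightarrow> x = 0"
    and m: "\<And>x y. nrm (x * y) = nrm x * nrm y"
    and t: "\<And>x y. nrm (x + y) \<le> max (nrm x) (nrm y)"
    using assms unfolding nonarch_norm_def by auto
  show "nrm 0 = 0" using z by simp
  have "nrm 1 = nrm 1 * nrm 1" using m[of 1 1] by simp
  moreover have "nrm (1::'a) \<noteq> 0" using z by simp
  ultimately show one: "nrm (1::'a) = 1" by simp
  have t1: "nrm (-1::'a) * nrm (-1) = 1" using m[of "-1::'a" "-1"] one by simp
  have "(nrm (-1::'a) - 1) * (nrm (-1) + 1) = 0" using t1 by (simp add: algebra_simps)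
  moreover have "nrm (-1::'a) + 1 > 0" using nn[of "-1"] by simp
  ultimately have mo: "nrm (-1::'a) = 1" by simp
  have neg: "\<And>y. nrm (- y) = nrm y"
  proof -
    fix y :: 'a
    have "nrm (-1 * y) = nrm (-1) * nrm y" by (rule m)
    thus "nrm (- y) = nrm y" using mo by simp
  qed
  show "nrm (- x) = nrm x" by (rule neg)
  show "\<And>x. 0 \<le> nrm x" by (rule nn)
  show "\<And>x y. nrm (x * y) = nrm x * nrm y" by (rule m)
  show "\<And>x y. nrm (x + y) \<le> max (nrm x) (nrm y)" by (rule t)
  fix x y :: 'a
  have "nrm (x + (-y)) \<le> max (nrm x) (nrm (-y))" by (rule t)
  moreover have "nrm (-y) = nrm y" by (rule neg)
  ultimately show "nrm (x - y) \<le> max (nrm x) (nrm y)" by simp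
qed

theorem claim2p18:
  fixes nrm :: "'a::field \<Rightarrow> real" and R :: real and F :: "('a \<times> rat) set"
  assumes "alg_closed TYPE('a)"
    and "nonarch_norm nrm"
    and "complete_wrt nrm"
    and "0 < R"
    and "R_good nrm R F"
  shows "bounded_K_seminorm nrm R (filter_norm nrm F)"
proof -
  note N = nn_basic[OF assms(2)]
  have Fne: "F \<noteq> {}" and Fball: "\<And>B. B \<in> F \<Longrightarrow> formal_ball nrm R B"
    and Fmeet: "\<And>B1 B2. B1 \<in> F \<Longrightarrow> B2 \<in> F \<Longrightarrow> \<exists>B3\<in>F. ball_sub nrm B3 B1 \<and> ball_sub nrm B3 B2"
    and Fbig: "\<And>k q. nrm k \<le> R \<Longrightarrow> R < real_of_rat q \<Longrightarrow> (k, q) \<in> F"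
    using assms(5) unfolding R_good_def ball_filter_def by blast+
  have qpos: "\<And>B. B \<in> F \<Longrightarrow> 0 < real_of_rat (snd B)"
    using Fball unfolding formal_ball_def by simp
  have bn_nn: "\<And>B f. 0 \<le> ball_norm nrm B f"
    unfolding ball_norm_def using N(4) by (simp add: le_max_iff_disj)
  have mem: "\<And>q f. q \<in> filter_norm nrm F f \<longleftrightarrow> (\<exists>B\<in>F. ball_norm nrm B f < real_of_rat q)"
    unfolding filter_norm_def rsec_def by auto
  have mono: "ball_norm nrm B' f \<le> ball_norm nrm B f" if "ball_sub nrm B' B" "B' \<in> F" for B B' f
  proof -
    obtain k q where B: "B = (k, q)" by force
    obtain k' q' where B': "B' = (k', q')" by force
    obtain a b where f: "f = (a, b)" by force
    have s: "nrm (k - k') < real_of_rat q" "q' \<le> q" using that(1) B B' unfolding ball_sub_def by auto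
    have "a * k' - b = (a * k - b) - a * (k - k')" by (simp add: algebra_simps)
    hence "nrm (a * k' - b) \<le> max (nrm (a * k - b)) (nrm a * nrm (k - k'))"
      using N(7)[of "a * k - b" "a * (k - k')"] N(5)[of a "k - k'"] by (simp only:)
    moreover have "nrm a * nrm (k - k') \<le> nrm a * real_of_rat q"
      using s(1) N(4)[of a] by (simp add: mult_left_mono)
    moreover have "nrm a * real_of_rat q' \<le> nrm a * real_of_rat q"
      using s(2) N(4)[of a] by (simp add: mult_left_mono of_rat_less_eq)
    ultimately show ?thesis unfolding ball_norm_def B B' f by auto
  qed
  have addn: "ball_norm nrm B (lin_add f g) \<le> max (ball_norm nrm B f) (ball_norm nrm B g)"
    if "B \<in> F" for B f g
  proof -
    obtain k q where B: "B = (k, q)" by force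
    obtain a b where f: "f = (a, b)" by force
    obtain a' b' where g: "g = (a', b')" by force
    have "(a + a') * k - (b + b') = (a * k - b) + (a' * k - b')" by (simp add: algebra_simps)
    hence 1: "nrm ((a + a') * k - (b + b')) \<le> max (nrm (a * k - b)) (nrm (a' * k - b'))"
      using N(6) by metis
    have q0: "0 \<le> real_of_rat q" using qpos[OF that] B by simp
    have "nrm (a + a') * real_of_rat q \<le> max (nrm a) (nrm a') * real_of_rat q"
      using N(6) q0 by (simp add: mult_right_mono)
    also have "\<dots> = max (nrm a * real_of_rat q) (nrm a' * real_of_rat q)"
      using q0 by (simp add: max_mult_distrib_right)
    finally show ?thesis using 1 unfolding ball_norm_def B f g lin_add_def by auto
  qed
  have P1: "inhabited_ureal (filter_norm nrm F f) \<and> ule (rsec 0) (filter_norm nrm F f)" for f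
  proof -
    obtain B where B: "B \<in> F" using Fne by auto
    obtain q :: rat where "ball_norm nrm B f < real_of_rat q"
      using of_rat_dense[of "ball_norm nrm B f" "ball_norm nrm B f + 1"] by auto
    hence ne: "filter_norm nrm F f \<noteq> {}" using mem B by blast
    have up: "upper_real (filter_norm nrm F f)"
      unfolding upper_real_def
    proof safe
      fix q q' assume "q \<in> filter_norm nrm F f" "q \<le> q'"
      thus "q' \<in> filter_norm nrm F f" using mem
        by (meson le_less_trans linorder_not_le of_rat_less)
    next
      fix q assume "q \<in> filter_norm nrm F f"
      then obtain B where "B \<in> F" "ball_norm nrm B f < real_of_rat q" using mem by blast
      then obtain q' :: rat where "ball_norm nrm B f < real_of_rat q'" "real_of_rat q' < real_of_rat q"
        using of_rat_dense by blast
      thus "\<exists>q'\<in>filter_norm nrm F f. q' < q" using mem \<open>B \<in> F\<close> of_rat_less by blast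
    qed
    have "filter_norm nrm F f \<subseteq> rsec 0"
    proof
      fix q assume "q \<in> filter_norm nrm F f"
      then obtain B where "ball_norm nrm B f < real_of_rat q" using mem by blast
      hence "0 < real_of_rat q" using bn_nn[of B f] by linarith
      thus "q \<in> rsec 0" unfolding rsec_def by simp
    qed
    thus ?thesis using ne up unfolding inhabited_ureal_def ule_def by simp
  qed
  have const: "ball_norm nrm B (0, - a) = nrm a" for B a
    unfolding ball_norm_def using N by simp
  have P2: "filter_norm nrm F (0, - a) = rsec (nrm a)" for a
    unfolding filter_norm_def const using Fne by auto
  have P3: "filter_norm nrm F (a, 0) = umult (rsec (nrm a)) (filter_norm nrm F (1, 0))" for a
  proof -
    define m where "m B = max (nrm (fst B)) (real_of_rat (snd B))" for B
    have mpos: "0 < m B" if "B \<in> F" for B using qpos[OF that] unfolding m_def by (simp add: less_max_iff_disj)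
    have bna: "ball_norm nrm B (a, 0) = nrm a * m B" for B
      unfolding ball_norm_def m_def using N(4)[of a] by (simp add: N(5) max_mult_distrib_left)
    have bn1: "ball_norm nrm B (1, 0) = m B" for B
      using bna[of B] N(2) by (simp add: ball_norm_def m_def)
    show ?thesis
    proof (rule set_eqI)
      fix q
      show "q \<in> filter_norm nrm F (a, 0) \<longleftrightarrow> q \<in> umult (rsec (nrm a)) (filter_norm nrm F (1, 0))"
      proof
        assume "q \<in> filter_norm nrm F (a, 0)"
        then obtain B where B: "B \<in> F" "nrm a * m B < real_of_rat q" using mem bna by metis
        have mB: "0 < m B" using mpos B(1) .
        have qp: "0 < real_of_rat q" using B(2) mB N(4)[of a]
          by (smt (verit) mult_nonneg_nonneg)
        have "m B < real_of_rat q / nrm a \<or> nrm a = 0"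
          using B(2) N(4)[of a] by (auto simp: field_simps)
        hence "\<exists>s::rat. m B < real_of_rat s \<and> nrm a * real_of_rat s < real_of_rat q"
        proof
          assume h: "m B < real_of_rat q / nrm a"
          then obtain s :: rat where s: "m B < real_of_rat s" "real_of_rat s < real_of_rat q / nrm a"
            using of_rat_dense by blast
          have "nrm a \<noteq> 0" using h mB by auto
          hence "nrm a > 0" using N(4)[of a] by simp
          thus ?thesis using s by (intro exI[of _ s]) (auto simp: field_simps)
        next
          assume "nrm a = 0"
          thus ?thesis using of_rat_dense[of "m B" "m B + 1"] qp by auto
        qed
        then obtain s :: rat where s: "m B < real_of_rat s" "nrm a * real_of_rat s < real_of_rat q" by blast
        have sp: "0 < real_of_rat s" using s mB by linarith
        have "nrm a < real_of_rat q / real_of_rat s" using s sp by (simp add: field_simps)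
        moreover have "real_of_rat q / real_of_rat s = real_of_rat (q / s)" by (simp add: of_rat_divide)
        ultimately have r: "q / s \<in> rsec (nrm a)" unfolding rsec_def by simp
        have "s \<in> filter_norm nrm F (1, 0)" using mem bn1 B(1) s(1) by metis
        moreover have "q / s * s \<le> q" using sp by simp
        ultimately show "q \<in> umult (rsec (nrm a)) (filter_norm nrm F (1, 0))"
          unfolding umult_def using r by blast
      next
        assume "q \<in> umult (rsec (nrm a)) (filter_norm nrm F (1, 0))"
        then obtain r s where r: "nrm a < real_of_rat r" and s: "s \<in> filter_norm nrm F (1, 0)"
          and rs: "r * s \<le> q" unfolding umult_def rsec_def by auto
        obtain B where B: "B \<in> F" "m B < real_of_rat s" using s mem bn1 by metis
        have mB: "0 < m B" using mpos B(1) .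
        have "nrm a * m B \<le> nrm a * real_of_rat s" using B N(4)[of a] by (simp add: mult_left_mono)
        also have "\<dots> < real_of_rat r * real_of_rat s"
        proof (rule mult_strict_right_mono)
          show "nrm a < real_of_rat r" by (rule r)
          show "0 < real_of_rat s" using B(2) mB by linarith
        qed
        also have "\<dots> \<le> real_of_rat q" using rs by (metis of_rat_less_eq of_rat_mult)
        finally show "q \<in> filter_norm nrm F (a, 0)" using mem bna B(1) by metis
      qed
    qed
  qed
  have P4: "ule (filter_norm nrm F (lin_add f g)) (umax (filter_norm nrm F f) (filter_norm nrm F g))" for f g
    unfolding ule_def umax_def
  proof
    fix q assume "q \<in> filter_norm nrm F f \<inter> filter_norm nrm F g"
    then obtain B1 B2 where B: "B1 \<in> F" "ball_norm nrm B1 f < real_of_rat q"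
      "B2 \<in> F" "ball_norm nrm B2 g < real_of_rat q" using mem by blast
    then obtain B3 where B3: "B3 \<in> F" "ball_sub nrm B3 B1" "ball_sub nrm B3 B2" using Fmeet by blast
    have "ball_norm nrm B3 f < real_of_rat q" using mono[OF B3(2,1), of f] B(2) by linarith
    moreover have "ball_norm nrm B3 g < real_of_rat q" using mono[OF B3(3,1), of g] B(4) by linarith
    ultimately have "ball_norm nrm B3 (lin_add f g) < real_of_rat q" using addn[OF B3(1), of f g] by simp
    thus "q \<in> filter_norm nrm F (lin_add f g)" using mem B3(1) by blast
  qed
  have P5: "ule (filter_norm nrm F (a, b)) (rsec (max (nrm a * R) (nrm b)))" for a b
    unfolding ule_def
  proof
    fix q assume "q \<in> rsec (max (nrm a * R) (nrm b))"
    hence q: "nrm a * R < real_of_rat q" "nrm b < real_of_rat q" unfolding rsec_def by auto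
    have "\<exists>q0::rat. R < real_of_rat q0 \<and> nrm a * real_of_rat q0 < real_of_rat q"
    proof (cases "nrm a = 0")
      case True
      thus ?thesis using of_rat_dense[of R "R+1"] q by auto
    next
      case False
      hence ap: "nrm a > 0" using N(4)[of a] by simp
      hence "R < real_of_rat q / nrm a" using q by (simp add: field_simps)
      then obtain q0 :: rat where "R < real_of_rat q0" "real_of_rat q0 < real_of_rat q / nrm a"
        using of_rat_dense by blast
      thus ?thesis using ap by (intro exI[of _ q0]) (auto simp: field_simps)
    qed
    then obtain q0 :: rat where q0: "R < real_of_rat q0" "nrm a * real_of_rat q0 < real_of_rat q" by blast
    have inF: "(0, q0) \<in> F" using Fbig[of 0 q0] q0 N(1) assms(4) by simp
    have "ball_norm nrm (0, q0) (a, b) < real_of_rat q"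
      unfolding ball_norm_def using q q0 N by simp
    thus "q \<in> filter_norm nrm F (a, b)" using mem inF by blast
  qed
  show ?thesis unfolding bounded_K_seminorm_def K_seminorm_def
    using P1 P2 P3 P4 P5 by blast
qed

end
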